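(* Let $(X,\le)$ be a poset and $E$ an equivalence relation on $X$ with ${\le}\subseteq E$. Let $\alpha:X\to X$ be an order automorphism of $(X,\le)$ and $\beta:X\to X$ a self-inverse dual order automorphism of $(X,\le)$ such that $\alpha,\beta\subseteq E$ and $\beta=\alpha\circ\beta\circ\alpha$. Set $1={\le}$ and $0=\alpha\circ({\le}^c)^\smile$, and for $R\in\mathsf{Up}(\mathbf E)$ define $R'=\alpha\circ\beta\circ R^c\circ\beta$. Then $\mathbf{Dq}(\mathbf E)=\langle\mathsf{Up}(\mathbf E),\cap,\cup,\circ,1,0,{\sim},-,'\rangle$ is a distributive quasi relation algebra. If $\alpha$ is the identity, then $\mathbf{Dq}(\mathbf E)$ is a cyclic distributive quasi relation algebra.
   Context: For binary relations: converse $R^\smile=\{(x,y)\mid(y,x)\in R\}$; composition $R\circ S=\{(x,y)\mid\exists z\,((x,z)\in R,(z,y)\in S)\}$. Functions are identified with their graphs $\{(x,\gamma(x))\}$. For a poset $(X,\le)$ and an equivalence relation $E\supseteq{\le}$, $E$ is partially ordered by $(u,v)\preceq(x,y)$ iff $x\le u$ and $v\le y$; $\mathbf E=(E,\preceq)$, $\mathsf{Up}(\mathbf E)$ is its set of up-sets. For $R\subseteq E$, $R^c=E\setminus R$. On $\mathsf{Up}(\mathbf E)$: $R\backslash S=(R^\smile\circ S^c)^c$, $R/S=(R^c\circ S^\smile)^c$, ${\sim}R=R\backslash 0$, $-R=0/R$. Order automorphism: bijection with $x\le y\iff\alpha(x)\le\alpha(y)$; dual order automorphism: bijection with $x\le y\iff\beta(y)\le\beta(x)$;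 self-inverse: $\beta\circ\beta=\mathrm{id}_X$. A quasi relation algebra is an algebra $\langle A,\wedge,\vee,\cdot,1,0,{\sim},-,'\rangle$ where $\langle A,\wedge,\vee,\cdot,1\rangle$ with residuals $\backslash,/$ is a residuated lattice, $0\in A$, ${\sim}a=a\backslash0$, $-a=0/a$, ${\sim}{-}a={-}{\sim}a=a$, and $'$ satisfies $a''=a$, $(a\vee b)'=a'\wedge b'$, $({\sim}a)'=-(a')$, $(a\cdot b)'=a'+b'$ where $a+b={\sim}(-b\cdot-a)$. It is distributive if its lattice reduct is distributive, cyclic if ${\sim}a=-a$ for all $a$. *)

theory Defs
  imports Main
begin

definition lat_le :: "('b \<Rightarrow> 'b \<Rightarrow> 'b) \<Rightarrow> 'b \<Rightarrow> 'b \<Rightarrow> bool" where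
  "lat_le meet a b \<longleftrightarrow> meet a b = a"

definition residuated_lattice ::
  "'b set \<Rightarrow> ('b \<Rightarrow> 'b \<Rightarrow> 'b) \<Rightarrow> ('b \<Rightarrow> 'b \<Rightarrow> 'b) \<Rightarrow> ('b \<Rightarrow> 'b \<Rightarrow> 'b) \<Rightarrow> 'b
   \<Rightarrow> ('b \<Rightarrow> 'b \<Rightarrow> 'b) \<Rightarrow> ('b \<Rightarrow> 'b \<Rightarrow> 'b) \<Rightarrow> bool" where
  "residuated_lattice A meet join mult one ldiv rdiv \<longleftrightarrow>
     one \<in> A \<and>
     (\<forall>a\<in>A. \<forall>b\<in>A. meet a b \<in> A \<and> join a b \<in> A \<and> mult a b \<in> A \<and> ldiv a b \<in> A \<and> rdiv a b \<in> A) \<and>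
     \<comment> \<open>lattice\<close>
     (\<forall>a\<in>A. \<forall>b\<in>A. meet a b = meet b a \<and> join a b = join b a) \<and>
     (\<forall>a\<in>A. \<forall>b\<in>A. \<forall>c\<in>A. meet (meet a b) c = meet a (meet b c) \<and> join (join a b) c = join a (join b c)) \<and>
     (\<forall>a\<in>A. \<forall>b\<in>A. meet a (join a b) = a \<and> join a (meet a b) = a) \<and>
     \<comment> \<open>monoid\<close>
     (\<forall>a\<in>A. \<forall>b\<in>A. \<forall>c\<in>A. mult (mult a b) c = mult a (mult b c)) \<and>
     (\<forall>a\<in>A. mult one a = a \<and> mult a one = a) \<and>
     \<comment> \<open>residuation\<close>
     (\<forall>a\<in>A. \<forall>b\<in>A. \<forall>c\<in>A.
        (lat_le meet (mult a b) c \<longleftrightarrow> lat_le meet b (ldiv a c)) \<and>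
        (lat_le meet (mult a b) c \<longleftrightarrow> lat_le meet a (rdiv c b)))"

definition quasi_relation_algebra ::
  "'b set \<Rightarrow> ('b \<Rightarrow> 'b \<Rightarrow> 'b) \<Rightarrow> ('b \<Rightarrow> 'b \<Rightarrow> 'b) \<Rightarrow> ('b \<Rightarrow> 'b \<Rightarrow> 'b) \<Rightarrow> 'b \<Rightarrow> 'b
   \<Rightarrow> ('b \<Rightarrow> 'b) \<Rightarrow> ('b \<Rightarrow> 'b) \<Rightarrow> ('b \<Rightarrow> 'b) \<Rightarrow> bool" where
  "quasi_relation_algebra A meet join mult one zero ng mn pr \<longleftrightarrow>
     (\<exists>ldiv rdiv. residuated_lattice A meet join mult one ldiv rdiv \<and>
        (\<forall>a\<in>A. ng a = ldiv a zero \<and> mn a = rdiv zero a)) \<and>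
     zero \<in> A \<and>
     (\<forall>a\<in>A. ng a \<in> A \<and> mn a \<in> A \<and> pr a \<in> A) \<and>
     (\<forall>a\<in>A. ng (mn a) = a \<and> mn (ng a) = a) \<and>
     (\<forall>a\<in>A. pr (pr a) = a) \<and>
     (\<forall>a\<in>A. \<forall>b\<in>A. pr (join a b) = meet (pr a) (pr b)) \<and>
     (\<forall>a\<in>A. pr (ng a) = mn (pr a)) \<and>
     (\<forall>a\<in>A. \<forall>b\<in>A. pr (mult a b) = ng (mult (mn (pr b)) (mn (pr a))))"
     \<comment> \<open>the last line is (a b)' = a' + b' with x + y = ~(-y \<cdot> -x)\<close>

definition distributive_qra where
  "distributive_qra A meet join mult one zero ng mn pr \<longleftrightarrow>
     quasi_relation_algebra A meet join mult one zero ng mn pr \<and>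
     (\<forall>a\<in>A. \<forall>b\<in>A. \<forall>c\<in>A. meet a (join b c) = join (meet a b) (meet a c))"

definition cyclic_distributive_qra where
  "cyclic_distributive_qra A meet join mult one zero ng mn pr \<longleftrightarrow>
     distributive_qra A meet join mult one zero ng mn pr \<and> (\<forall>a\<in>A. ng a = mn a)"

definition graph :: "'a set \<Rightarrow> ('a \<Rightarrow> 'a) \<Rightarrow> ('a \<times> 'a) set" where
  "graph X f = {(x, f x) | x. x \<in> X}"

definition order_automorphism :: "'a set \<Rightarrow> ('a \<times> 'a) set \<Rightarrow> ('a \<Rightarrow> 'a) \<Rightarrow> bool" where
  "order_automorphism X le f \<longleftrightarrow> bij_betw f X X \<and>
     (\<forall>x\<in>X. \<forall>y\<in>X. (x, y) \<in> le \<longleftrightarrow> (f x, f y) \<in> le)"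

definition dual_order_automorphism :: "'a set \<Rightarrow> ('a \<times> 'a) set \<Rightarrow> ('a \<Rightarrow> 'a) \<Rightarrow> bool" where
  "dual_order_automorphism X le f \<longleftrightarrow> bij_betw f X X \<and>
     (\<forall>x\<in>X. \<forall>y\<in>X. (x, y) \<in> le \<longleftrightarrow> (f y, f x) \<in> le)"

text \<open>(u,v) \<preceq> (x,y) iff x \<le> u and v \<le> y; up-sets of (E,\<preceq>).\<close>
definition Up :: "('a \<times> 'a) set \<Rightarrow> ('a \<times> 'a) set \<Rightarrow> ('a \<times> 'a) set set" where
  "Up le E = {R. R \<subseteq> E \<and>
     (\<forall>u v x y. (u, v) \<in> R \<and> (x, y) \<in> E \<and> (x, u) \<in> le \<and> (v, y) \<in> le \<longrightarrow> (x, y) \<in> R)}"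

definition rldiv :: "('a \<times> 'a) set \<Rightarrow> ('a \<times> 'a) set \<Rightarrow> ('a \<times> 'a) set \<Rightarrow> ('a \<times> 'a) set" where
  "rldiv E R S = E - (R\<inverse> O (E - S))"

definition rrdiv :: "('a \<times> 'a) set \<Rightarrow> ('a \<times> 'a) set \<Rightarrow> ('a \<times> 'a) set \<Rightarrow> ('a \<times> 'a) set" where
  "rrdiv E R S = E - ((E - R) O S\<inverse>)"

definition Dq_zero :: "'a set \<Rightarrow> ('a \<times> 'a) set \<Rightarrow> ('a \<times> 'a) set \<Rightarrow> ('a \<Rightarrow> 'a) \<Rightarrow> ('a \<times> 'a) set" where
  "Dq_zero X le E \<alpha> = graph X \<alpha> O (E - le)\<inverse>"

definition Dq_tilde where
  "Dq_tilde X le E \<alpha> R = rldiv E R (Dq_zero X le E \<alpha>)"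

definition Dq_minus where
  "Dq_minus X le E \<alpha> R = rrdiv E (Dq_zero X le E \<alpha>) R"

definition Dq_prime where
  "Dq_prime X E \<alpha> \<beta> R = graph X \<alpha> O graph X \<beta> O (E - R) O graph X \<beta>"

end

theory Submission
  imports Defs
begin

locale dq =
  fixes X :: "'a set" and le E :: "('a \<times> 'a) set" and \<alpha> \<beta> :: "'a \<Rightarrow> 'a"
  assumes po: "partial_order_on X le" and leX: "le \<subseteq> X \<times> X"
    and eq: "equiv X E" and leE: "le \<subseteq> E"
    and oa: "order_automorphism X le \<alpha>"
    and doa: "dual_order_automorphism X le \<beta>"
    and binv: "\<forall>x\<in>X. \<beta> (\<beta> x) = x"
    and aE: "graph X \<alpha> \<subseteq> E" and bE: "graph X \<beta> \<subseteq> E"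
    and bab: "graph X \<beta> = graph X \<alpha> O graph X \<beta> O graph X \<alpha>"
begin

definition ai where "ai = inv_into X \<alpha>"

lemma EX: "(x, y) \<in> E \<Longrightarrow> x \<in> X \<and> y \<in> X"
  using equiv_type[OF eq] by blast
lemma Erefl: "x \<in> X \<Longrightarrow> (x, x) \<in> E"
  using eq unfolding equiv_def refl_on_def by blast
lemma Esym: "(x, y) \<in> E \<Longrightarrow> (y, x) \<in> E"
  using eq unfolding equiv_def sym_def by blast
lemma Etrans: "(x, y) \<in> E \<Longrightarrow> (y, z) \<in> E \<Longrightarrow> (x, z) \<in> E"
  using eq unfolding equiv_def trans_def by blast
lemma lerefl: "x \<in> X \<Longrightarrow> (x, x) \<in> le"
  using partial_order_onD(1)[OF po] unfolding refl_on_def by blast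
lemma letrans: "(x, y) \<in> le \<Longrightarrow> (y, z) \<in> le \<Longrightarrow> (x, z) \<in> le"
  using partial_order_onD(2)[OF po] unfolding trans_def by blast
lemma leEE: "(x, y) \<in> le \<Longrightarrow> (x, y) \<in> E" using leE by blast
lemma leXX: "(x, y) \<in> le \<Longrightarrow> x \<in> X \<and> y \<in> X" using leX by blast

lemma aX: "x \<in> X \<Longrightarrow> \<alpha> x \<in> X"
  using oa unfolding order_automorphism_def bij_betw_def by blast
lemma bX: "x \<in> X \<Longrightarrow> \<beta> x \<in> X"
  using doa unfolding dual_order_automorphism_def bij_betw_def by blast
lemma amono: "x \<in> X \<Longrightarrow> y \<in> X \<Longrightarrow> (x, y) \<in> le \<longleftrightarrow> (\<alpha> x, \<alpha> y) \<in> le"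
  using oa unfolding order_automorphism_def by blast
lemma banti: "x \<in> X \<Longrightarrow> y \<in> X \<Longrightarrow> (x, y) \<in> le \<longleftrightarrow> (\<beta> y, \<beta> x) \<in> le"
  using doa unfolding dual_order_automorphism_def by blast
lemma bb: "x \<in> X \<Longrightarrow> \<beta> (\<beta> x) = x" using binv by blast
lemma xaE: "x \<in> X \<Longrightarrow> (x, \<alpha> x) \<in> E" using aE unfolding graph_def by blast
lemma xbE: "x \<in> X \<Longrightarrow> (x, \<beta> x) \<in> E" using bE unfolding graph_def by blast
lemma bab': "x \<in> X \<Longrightarrow> \<beta> x = \<alpha> (\<beta> (\<alpha> x))"
proof -
  assume x: "x \<in> X"
  have "(x, \<beta> x) \<in> graph X \<beta>" using x unfolding graph_def by blast
  hence "(x, \<beta> x) \<in> graph X \<alpha> O graph X \<beta> O graph X \<alpha>" using bab by simp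
  thus ?thesis unfolding graph_def by auto
qed
lemma aiX: "x \<in> X \<Longrightarrow> ai x \<in> X"
  using oa unfolding order_automorphism_def ai_def bij_betw_def by (metis inv_into_into)
lemma a_ai: "x \<in> X \<Longrightarrow> \<alpha> (ai x) = x"
  using oa unfolding order_automorphism_def ai_def bij_betw_def by (metis f_inv_into_f)
lemma ai_a: "x \<in> X \<Longrightarrow> ai (\<alpha> x) = x"
  using oa unfolding order_automorphism_def ai_def bij_betw_def by (metis inv_into_f_f)
lemma ai_le: "y \<in> X \<Longrightarrow> z \<in> X \<Longrightarrow> (y, \<alpha> z) \<in> le \<longleftrightarrow> (ai y, z) \<in> le"
  by (metis a_ai aiX amono)
lemma gg: "x \<in> X \<Longrightarrow> \<beta> (\<alpha> (\<beta> (\<alpha> x))) = x"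
  by (metis bab' bb)
lemma ai_b: "y \<in> X \<Longrightarrow> ai (\<beta> y) = \<beta> (\<alpha> y)"
  by (metis bab' ai_a aX bX)

lemma UpE: "R \<in> Up le E \<Longrightarrow> R \<subseteq> E" unfolding Up_def by blast
lemma UpI: "R \<in> Up le E \<Longrightarrow> (u, v) \<in> R \<Longrightarrow> (x, y) \<in> E \<Longrightarrow> (x, u) \<in> le \<Longrightarrow> (v, y) \<in> le \<Longrightarrow> (x, y) \<in> R"
  unfolding Up_def by blast

lemma UpIntro: "R \<subseteq> E \<Longrightarrow> (\<And>u v x y. (u, v) \<in> R \<Longrightarrow> (x, y) \<in> E \<Longrightarrow> (x, u) \<in> le \<Longrightarrow> (v, y) \<in> le \<Longrightarrow> (x, y) \<in> R) \<Longrightarrow> R \<in> Up le E"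
  unfolding Up_def by blast

lemma zero_char: "(x, y) \<in> Dq_zero X le E \<alpha> \<longleftrightarrow> (x, y) \<in> E \<and> (y, \<alpha> x) \<notin> le"
proof
  assume "(x, y) \<in> Dq_zero X le E \<alpha>"
  thus "(x, y) \<in> E \<and> (y, \<alpha> x) \<notin> le"
    unfolding Dq_zero_def graph_def by (auto dest: EX intro: Etrans Esym xaE)
next
  assume h: "(x, y) \<in> E \<and> (y, \<alpha> x) \<notin> le"
  hence x: "x \<in> X" using EX by blast
  have "(y, \<alpha> x) \<in> E" using h x by (meson Esym Etrans xaE)
  hence "(\<alpha> x, y) \<in> (E - le)\<inverse>" using h by blast
  thus "(x, y) \<in> Dq_zero X le E \<alpha>" unfolding Dq_zero_def graph_def using x by blast
qed

lemma prime_char: "(x, y) \<in> Dq_prime X E \<alpha> \<beta> R \<longleftrightarrow> (x, y) \<in> E \<and> (\<beta> (\<alpha> x), \<beta> y) \<notin> R"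
proof
  assume "(x, y) \<in> Dq_prime X E \<alpha> \<beta> R"
  then obtain w where x: "x \<in> X" and w: "w \<in> X" and y: "y = \<beta> w" and h: "(\<beta> (\<alpha> x), w) \<in> E - R"
    unfolding Dq_prime_def graph_def by auto
  have "(x, y) \<in> E" using x w y h
    by (metis DiffD1 Esym Etrans aX xaE xbE)
  thus "(x, y) \<in> E \<and> (\<beta> (\<alpha> x), \<beta> y) \<notin> R" using h y w bb by auto
next
  assume h: "(x, y) \<in> E \<and> (\<beta> (\<alpha> x), \<beta> y) \<notin> R"
  hence x: "x \<in> X" and y: "y \<in> X" using EX by auto
  have "(\<beta> (\<alpha> x), \<beta> y) \<in> E"
    by (metis Esym Etrans aX h x xaE xbE y bX)
  hence "(\<beta> (\<alpha> x), \<beta> y) \<in> E - R" using h by blast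
  moreover have "y = \<beta> (\<beta> y)" using bb y by simp
  ultimately show "(x, y) \<in> Dq_prime X E \<alpha> \<beta> R"
    unfolding Dq_prime_def graph_def using x y aX bX by blast
qed

lemma tilde_char: assumes R: "R \<in> Up le E"
  shows "(x, y) \<in> Dq_tilde X le E \<alpha> R \<longleftrightarrow> (x, y) \<in> E \<and> (ai y, x) \<notin> R"
proof -
  have key: "(x, y) \<in> R\<inverse> O (E - Dq_zero X le E \<alpha>) \<longleftrightarrow> (ai y, x) \<in> R" if xy: "(x, y) \<in> E"
  proof
    assume "(x, y) \<in> R\<inverse> O (E - Dq_zero X le E \<alpha>)"
    then obtain z where zx: "(z, x) \<in> R" and zy: "(z, y) \<in> E" and l: "(y, \<alpha> z) \<in> le"
      using zero_char by auto
    have z: "z \<in> X" and y: "y \<in> X" using zy EX by auto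
    have "(ai y, z) \<in> le" using ai_le[OF y z] l by simp
    moreover have "(ai y, x) \<in> E"
      by (metis Esym Etrans a_ai aiX xaE xy y)
    ultimately show "(ai y, x) \<in> R" using UpI[OF R zx] lerefl EX xy by blast
  next
    assume h: "(ai y, x) \<in> R"
    have y: "y \<in> X" using xy EX by auto
    have "(ai y, y) \<in> E" by (metis a_ai aiX xaE y)
    moreover have "(y, \<alpha> (ai y)) \<in> le" using a_ai lerefl y by simp
    ultimately have "(ai y, y) \<in> E - Dq_zero X le E \<alpha>" using zero_char by blast
    thus "(x, y) \<in> R\<inverse> O (E - Dq_zero X le E \<alpha>)" using h by blast
  qed
  show ?thesis unfolding Dq_tilde_def rldiv_def using key by blast
qed

lemma minus_char: assumes R: "R \<in> Up le E"
  shows "(x, y) \<in> Dq_minus X le E \<alpha> R \<longleftrightarrow> (x, y) \<in> E \<and> (y, \<alpha> x) \<notin> R"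
proof -
  have key: "(x, y) \<in> (E - Dq_zero X le E \<alpha>) O R\<inverse> \<longleftrightarrow> (y, \<alpha> x) \<in> R" if xy: "(x, y) \<in> E"
  proof
    assume "(x, y) \<in> (E - Dq_zero X le E \<alpha>) O R\<inverse>"
    then obtain z where xz: "(x, z) \<in> E" and l: "(z, \<alpha> x) \<in> le" and yz: "(y, z) \<in> R"
      using zero_char by auto
    have "(y, \<alpha> x) \<in> E" by (meson EX Esym Etrans xaE xy)
    thus "(y, \<alpha> x) \<in> R" using UpI[OF R yz] l lerefl EX xy by blast
  next
    assume h: "(y, \<alpha> x) \<in> R"
    have x: "x \<in> X" using xy EX by auto
    have "(x, \<alpha> x) \<in> E - Dq_zero X le E \<alpha>" using zero_char xaE[OF x] lerefl aX x by blast
    thus "(x, y) \<in> (E - Dq_zero X le E \<alpha>) O R\<inverse>" using h by blast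
  qed
  show ?thesis unfolding Dq_minus_def rrdiv_def using key by blast
qed

lemma zero_Up: "Dq_zero X le E \<alpha> \<in> Up le E"
proof (rule UpIntro)
  show "Dq_zero X le E \<alpha> \<subseteq> E" using zero_char by auto
next
  fix u v x y assume uv: "(u, v) \<in> Dq_zero X le E \<alpha>" and xy: "(x, y) \<in> E"
    and xu: "(x, u) \<in> le" and vy: "(v, y) \<in> le"
  have "(v, \<alpha> u) \<notin> le" using uv zero_char by blast
  moreover have "(\<alpha> x, \<alpha> u) \<in> le" using xu amono leXX by blast
  ultimately have "(y, \<alpha> x) \<notin> le" using vy letrans by blast
  thus "(x, y) \<in> Dq_zero X le E \<alpha>" using xy zero_char by blast
qed

lemma le_Up: "le \<in> Up le E"
  unfolding Up_def using leE letrans by blast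

lemma int_Up: "R \<in> Up le E \<Longrightarrow> S \<in> Up le E \<Longrightarrow> R \<inter> S \<in> Up le E"
  unfolding Up_def by blast
lemma un_Up: "R \<in> Up le E \<Longrightarrow> S \<in> Up le E \<Longrightarrow> R \<union> S \<in> Up le E"
  unfolding Up_def by blast

lemma comp_Up: assumes R: "R \<in> Up le E" and S: "S \<in> Up le E" shows "R O S \<in> Up le E"
proof (rule UpIntro)
  show "R O S \<subseteq> E" using UpE[OF R] UpE[OF S] Etrans by blast
next
  fix u v x y assume uv: "(u, v) \<in> R O S" and xy: "(x, y) \<in> E"
    and xu: "(x, u) \<in> le" and vy: "(v, y) \<in> le"
  then obtain w where uw: "(u, w) \<in> R" and wv: "(w, v) \<in> S" by blast
  have "(x, w) \<in> E" using uw UpE[OF R] xu leEE Etrans by blast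
  hence "(x, w) \<in> R" using UpI[OF R uw] xu lerefl EX by blast
  moreover have "(w, y) \<in> E" using wv UpE[OF S] vy leEE Etrans by blast
  hence "(w, y) \<in> S" using UpI[OF S wv] vy lerefl EX by blast
  ultimately show "(x, y) \<in> R O S" by blast
qed

lemma rldiv_Up: assumes R: "R \<in> Up le E" and T: "T \<in> Up le E" shows "rldiv E R T \<in> Up le E"
proof (rule UpIntro)
  show "rldiv E R T \<subseteq> E" unfolding rldiv_def by blast
next
  fix u v x y assume uv0: "(u, v) \<in> rldiv E R T" and xy: "(x, y) \<in> E"
    and xu: "(x, u) \<in> le" and vy: "(v, y) \<in> le"
  have uv: "(u, v) \<in> E" and nuv: "(u, v) \<notin> R\<inverse> O (E - T)" using uv0 unfolding rldiv_def by auto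
  have "(x, y) \<notin> R\<inverse> O (E - T)"
  proof
    assume "(x, y) \<in> R\<inverse> O (E - T)"
    then obtain z where zx': "(z, x) \<in> R" and zy: "(z, y) \<in> E - T" by blast
    have "(z, u) \<in> E" using zx' UpE[OF R] xu leEE Etrans by blast
    hence "(z, u) \<in> R" using UpI[OF R zx'] xu EX lerefl by blast
    moreover have "(z, v) \<in> E" using \<open>(z, u) \<in> E\<close> uv Etrans by blast
    moreover have "(z, v) \<notin> T" using UpI[OF T, of z v z y] zy vy lerefl EX by blast
    ultimately show False using nuv by blast
  qed
  thus "(x, y) \<in> rldiv E R T" using xy unfolding rldiv_def by blast
qed

lemma rrdiv_Up: assumes R: "R \<in> Up le E" and T: "T \<in> Up le E" shows "rrdiv E T R \<in> Up le E"
proof (rule UpIntro)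
  show "rrdiv E T R \<subseteq> E" unfolding rrdiv_def by blast
next
  fix u v x y assume uv0: "(u, v) \<in> rrdiv E T R" and xy: "(x, y) \<in> E"
    and xu: "(x, u) \<in> le" and vy: "(v, y) \<in> le"
  have uv: "(u, v) \<in> E" and nuv: "(u, v) \<notin> (E - T) O R\<inverse>" using uv0 unfolding rrdiv_def by auto
  have "(x, y) \<notin> (E - T) O R\<inverse>"
  proof
    assume "(x, y) \<in> (E - T) O R\<inverse>"
    then obtain z where xz: "(x, z) \<in> E - T" and yz: "(y, z) \<in> R" by blast
    have "(v, z) \<in> E" using yz UpE[OF R] vy leEE Etrans by blast
    hence "(v, z) \<in> R" using UpI[OF R yz] vy EX lerefl by blast
    moreover have "(u, z) \<in> E" using \<open>(v, z) \<in> E\<close> uv Etrans by blast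
    moreover have "(u, z) \<notin> T" using UpI[OF T, of u z x z] xz xu lerefl EX by blast
    ultimately show False using nuv by blast
  qed
  thus "(x, y) \<in> rrdiv E T R" using xy unfolding rrdiv_def by blast
qed

lemma tilde_Up: "R \<in> Up le E \<Longrightarrow> Dq_tilde X le E \<alpha> R \<in> Up le E"
  unfolding Dq_tilde_def using rldiv_Up zero_Up by blast
lemma minus_Up: "R \<in> Up le E \<Longrightarrow> Dq_minus X le E \<alpha> R \<in> Up le E"
  unfolding Dq_minus_def using rrdiv_Up zero_Up by blast

lemma prime_Up: assumes R: "R \<in> Up le E" shows "Dq_prime X E \<alpha> \<beta> R \<in> Up le E"
proof (rule UpIntro)
  show "Dq_prime X E \<alpha> \<beta> R \<subseteq> E" using prime_char by auto
next
  fix u v x y assume uv: "(u, v) \<in> Dq_prime X E \<alpha> \<beta> R" and xy: "(x, y) \<in> E"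
    and xu: "(x, u) \<in> le" and vy: "(v, y) \<in> le"
  have u: "u \<in> X" and v: "v \<in> X" and x: "x \<in> X" and y: "y \<in> X" using xu vy leXX by auto
  have n: "(\<beta> (\<alpha> u), \<beta> v) \<notin> R" using uv prime_char by blast
  have l1: "(\<beta> (\<alpha> u), \<beta> (\<alpha> x)) \<in> le" using xu amono banti aX u x by blast
  have l2: "(\<beta> y, \<beta> v) \<in> le" using vy banti v y by blast
  have "(\<beta> (\<alpha> u), \<beta> v) \<in> E"
    using uv prime_char by (metis EX Esym Etrans aX bX xaE xbE)
  hence "(\<beta> (\<alpha> x), \<beta> y) \<notin> R" using UpI[OF R, of "\<beta> (\<alpha> x)" "\<beta> y" "\<beta> (\<alpha> u)" "\<beta> v"] n l1 l2 by blast
  thus "(x, y) \<in> Dq_prime X E \<alpha> \<beta> R" using xy prime_char by blast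
qed

lemma le_comp: "R \<in> Up le E \<Longrightarrow> le O R = R"
proof (intro equalityI subsetI)
  fix p assume R: "R \<in> Up le E" and "p \<in> le O R"
  then obtain x z y where p: "p = (x, y)" and xz: "(x, z) \<in> le" and zy: "(z, y) \<in> R" by blast
  have "(x, y) \<in> E" using xz zy UpE[OF R] leEE Etrans by blast
  thus "p \<in> R" using UpI[OF R zy] xz lerefl EX p by blast
next
  fix p assume R: "R \<in> Up le E" and "p \<in> R"
  then obtain x y where p: "p = (x, y)" and "(x, y) \<in> R" by (cases p) auto
  moreover have "(x, x) \<in> le" using UpE[OF R] \<open>(x, y) \<in> R\<close> EX lerefl by blast
  ultimately show "p \<in> le O R" by blast
qed

lemma comp_le: "R \<in> Up le E \<Longrightarrow> R O le = R"
proof (intro equalityI subsetI)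
  fix p assume R: "R \<in> Up le E" and "p \<in> R O le"
  then obtain x z y where p: "p = (x, y)" and xz: "(x, z) \<in> R" and zy: "(z, y) \<in> le" by blast
  have "(x, y) \<in> E" using xz zy UpE[OF R] leEE Etrans by blast
  thus "p \<in> R" using UpI[OF R xz] zy lerefl EX p by blast
next
  fix p assume R: "R \<in> Up le E" and "p \<in> R"
  then obtain x y where p: "p = (x, y)" and "(x, y) \<in> R" by (cases p) auto
  moreover have "(y, y) \<in> le" using UpE[OF R] \<open>(x, y) \<in> R\<close> EX lerefl by blast
  ultimately show "p \<in> R O le" by blast
qed

lemma resid1: assumes R: "R \<in> Up le E" and S: "S \<in> Up le E" and T: "T \<in> Up le E"
  shows "R O S \<subseteq> T \<longleftrightarrow> S \<subseteq> rldiv E R T"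
  using UpE[OF R] UpE[OF S] Etrans unfolding rldiv_def by blast

lemma resid2: assumes R: "R \<in> Up le E" and S: "S \<in> Up le E" and T: "T \<in> Up le E"
  shows "R \<subseteq> rrdiv E T S \<longleftrightarrow> R O S \<subseteq> T"
  using UpE[OF R] UpE[OF S] Etrans unfolding rrdiv_def by blast

lemma ng_mn: assumes R: "R \<in> Up le E" shows "Dq_tilde X le E \<alpha> (Dq_minus X le E \<alpha> R) = R"
proof (intro set_eqI)
  fix p :: "'a \<times> 'a" obtain x y where p: "p = (x, y)" by (cases p)
  have "(x, y) \<in> Dq_tilde X le E \<alpha> (Dq_minus X le E \<alpha> R) \<longleftrightarrow> (x, y) \<in> E \<and> (ai y, x) \<notin> Dq_minus X le E \<alpha> R"
    using tilde_char[OF minus_Up[OF R]] by blast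
  also have "\<dots> \<longleftrightarrow> (x, y) \<in> R"
  proof (cases "(x, y) \<in> E")
    case True
    hence y: "y \<in> X" using EX by blast
    have "(ai y, x) \<in> E" by (metis Esym Etrans a_ai aiX xaE True y)
    thus ?thesis using minus_char[OF R] a_ai[OF y] True by auto
  next
    case False thus ?thesis using UpE[OF R] by blast
  qed
  finally show "p \<in> Dq_tilde X le E \<alpha> (Dq_minus X le E \<alpha> R) \<longleftrightarrow> p \<in> R" using p by simp
qed

lemma mn_ng: assumes R: "R \<in> Up le E" shows "Dq_minus X le E \<alpha> (Dq_tilde X le E \<alpha> R) = R"
proof (intro set_eqI)
  fix p :: "'a \<times> 'a" obtain x y where p: "p = (x, y)" by (cases p)
  have "(x, y) \<in> Dq_minus X le E \<alpha> (Dq_tilde X le E \<alpha> R) \<longleftrightarrow> (x, y) \<in> E \<and> (y, \<alpha> x) \<notin> Dq_tilde X le E \<alpha> R"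
    using minus_char[OF tilde_Up[OF R]] by blast
  also have "\<dots> \<longleftrightarrow> (x, y) \<in> R"
  proof (cases "(x, y) \<in> E")
    case True
    hence x: "x \<in> X" using EX by blast
    have "(y, \<alpha> x) \<in> E" by (meson Esym Etrans xaE True x)
    thus ?thesis using tilde_char[OF R] ai_a[OF x] True by auto
  next
    case False thus ?thesis using UpE[OF R] by blast
  qed
  finally show "p \<in> Dq_minus X le E \<alpha> (Dq_tilde X le E \<alpha> R) \<longleftrightarrow> p \<in> R" using p by simp
qed

lemma bbE: "(x, y) \<in> E \<Longrightarrow> (\<beta> (\<alpha> x), \<beta> y) \<in> E"
  by (metis EX Esym Etrans aX bX xaE xbE)

lemma pr_pr: assumes R: "R \<in> Up le E" shows "Dq_prime X E \<alpha> \<beta> (Dq_prime X E \<alpha> \<beta> R) = R"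
proof (intro set_eqI)
  fix p :: "'a \<times> 'a" obtain x y where p: "p = (x, y)" by (cases p)
  have "(x, y) \<in> Dq_prime X E \<alpha> \<beta> (Dq_prime X E \<alpha> \<beta> R) \<longleftrightarrow> (x, y) \<in> R"
  proof (cases "(x, y) \<in> E")
    case True
    hence x: "x \<in> X" and y: "y \<in> X" using EX by auto
    show ?thesis using prime_char[of x y] prime_char[of "\<beta> (\<alpha> x)" "\<beta> y" R] bbE[OF True] gg[OF x] bb[OF y] True
      by auto
  next
    case False thus ?thesis using UpE[OF R] prime_char by blast
  qed
  thus "p \<in> Dq_prime X E \<alpha> \<beta> (Dq_prime X E \<alpha> \<beta> R) \<longleftrightarrow> p \<in> R" using p by simp
qed

lemma pr_un: "Dq_prime X E \<alpha> \<beta> (R \<union> S) = Dq_prime X E \<alpha> \<beta> R \<inter> Dq_prime X E \<alpha> \<beta> S"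
  by (auto simp: prime_char)

lemma pr_ng: assumes R: "R \<in> Up le E"
  shows "Dq_prime X E \<alpha> \<beta> (Dq_tilde X le E \<alpha> R) = Dq_minus X le E \<alpha> (Dq_prime X E \<alpha> \<beta> R)"
proof (intro set_eqI)
  fix p :: "'a \<times> 'a" obtain x y where p: "p = (x, y)" by (cases p)
  have "(x, y) \<in> Dq_prime X E \<alpha> \<beta> (Dq_tilde X le E \<alpha> R) \<longleftrightarrow> (x, y) \<in> Dq_minus X le E \<alpha> (Dq_prime X E \<alpha> \<beta> R)"
  proof (cases "(x, y) \<in> E")
    case True
    hence x: "x \<in> X" and y: "y \<in> X" using EX by auto
    have "(y, \<alpha> x) \<in> E" by (meson Esym Etrans xaE True x)
    then show ?thesis using prime_char[of x y] tilde_char[OF R, of "\<beta> (\<alpha> x)" "\<beta> y"]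
        minus_char[OF prime_Up[OF R], of x y] prime_char[of y "\<alpha> x" R]
        bbE[OF True] ai_b[OF y] True by auto
  next
    case False thus ?thesis using prime_char minus_char[OF prime_Up[OF R]] by blast
  qed
  thus "p \<in> Dq_prime X E \<alpha> \<beta> (Dq_tilde X le E \<alpha> R) \<longleftrightarrow> p \<in> Dq_minus X le E \<alpha> (Dq_prime X E \<alpha> \<beta> R)"
    using p by simp
qed

lemma star_char: assumes R: "R \<in> Up le E"
  shows "(x, y) \<in> Dq_minus X le E \<alpha> (Dq_prime X E \<alpha> \<beta> R) \<longleftrightarrow> (x, y) \<in> E \<and> (\<beta> (\<alpha> y), \<beta> (\<alpha> x)) \<in> R"
proof (cases "(x, y) \<in> E")
  case True
  hence x: "x \<in> X" and y: "y \<in> X" using EX by auto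
  have "(y, \<alpha> x) \<in> E" by (meson Esym Etrans xaE True x)
  then show ?thesis using minus_char[OF prime_Up[OF R], of x y] prime_char[of y "\<alpha> x" R] True by auto
next
  case False thus ?thesis using minus_char[OF prime_Up[OF R]] by blast
qed

lemma pr_mult: assumes R: "R \<in> Up le E" and S: "S \<in> Up le E"
  shows "Dq_prime X E \<alpha> \<beta> (R O S) = Dq_tilde X le E \<alpha> (Dq_minus X le E \<alpha> (Dq_prime X E \<alpha> \<beta> S) O Dq_minus X le E \<alpha> (Dq_prime X E \<alpha> \<beta> R))"
    (is "?L = ?R")
proof (intro set_eqI)
  let ?S = "Dq_minus X le E \<alpha> (Dq_prime X E \<alpha> \<beta> S)"
  let ?T = "Dq_minus X le E \<alpha> (Dq_prime X E \<alpha> \<beta> R)"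
  have ST: "?S O ?T \<in> Up le E" using comp_Up minus_Up prime_Up R S by blast
  fix p :: "'a \<times> 'a" obtain x y where p: "p = (x, y)" by (cases p)
  have "(x, y) \<in> ?L \<longleftrightarrow> (x, y) \<in> ?R"
  proof (cases "(x, y) \<in> E")
    case True
    hence x: "x \<in> X" and y: "y \<in> X" using EX by auto
    have key: "(ai y, x) \<in> ?S O ?T \<longleftrightarrow> (\<beta> (\<alpha> x), \<beta> y) \<in> R O S"
    proof
      assume "(ai y, x) \<in> ?S O ?T"
      then obtain z where h1: "(ai y, z) \<in> ?S" and h2: "(z, x) \<in> ?T" by blast
      have z: "z \<in> X" using h2 star_char[OF R] EX by blast
      have "(\<beta> (\<alpha> z), \<beta> (\<alpha> (ai y))) \<in> S" using h1 star_char[OF S] by blast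
      hence "(\<beta> (\<alpha> z), \<beta> y) \<in> S" using a_ai[OF y] by simp
      moreover have "(\<beta> (\<alpha> x), \<beta> (\<alpha> z)) \<in> R" using h2 star_char[OF R] by blast
      ultimately show "(\<beta> (\<alpha> x), \<beta> y) \<in> R O S" by blast
    next
      assume "(\<beta> (\<alpha> x), \<beta> y) \<in> R O S"
      then obtain w where h1: "(\<beta> (\<alpha> x), w) \<in> R" and h2: "(w, \<beta> y) \<in> S" by blast
      have w: "w \<in> X" using h1 UpE[OF R] EX by blast
      define z where "z = \<beta> (\<alpha> w)"
      have z: "z \<in> X" using z_def w aX bX by simp
      have gz: "\<beta> (\<alpha> z) = w" using z_def gg[OF w] by simp
      have e1: "(w, \<alpha> w) \<in> E" using xaE[OF w] .
      have e2: "(\<alpha> w, z) \<in> E" using xbE[OF aX[OF w]] z_def by simp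
      have zw: "(z, w) \<in> E" using Etrans[OF e1 e2] Esym by blast
      have bw: "(\<beta> (\<alpha> x), w) \<in> E" using h1 UpE[OF R] by blast
      have e3: "(x, \<beta> (\<alpha> x)) \<in> E" using Etrans[OF xaE[OF x] xbE[OF aX[OF x]]] .
      have wx: "(w, x) \<in> E" using Etrans[OF e3 bw] Esym by blast
      have wby: "(w, \<beta> y) \<in> E" using h2 UpE[OF S] by blast
      have e4: "(ai y, y) \<in> E" using xaE[OF aiX[OF y]] a_ai[OF y] by simp
      have e5: "(ai y, \<beta> y) \<in> E" using Etrans[OF e4 xbE[OF y]] .
      have wy: "(ai y, z) \<in> E" using Etrans[OF e5 Esym[OF wby]] Etrans Esym zw by blast
      have "(\<beta> (\<alpha> z), \<beta> (\<alpha> (ai y))) \<in> S" using h2 gz a_ai[OF y] by simp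
      hence "(ai y, z) \<in> ?S" using star_char[OF S, of "ai y" z] wy by blast
      moreover have "(z, x) \<in> E" using Etrans[OF zw wx] .
      hence "(z, x) \<in> ?T" using star_char[OF R, of z x] h1 gz by simp
      ultimately show "(ai y, x) \<in> ?S O ?T" by blast
    qed
    show ?thesis using prime_char[of x y "R O S"] tilde_char[OF ST, of x y] key True by blast
  next
    case False thus ?thesis using prime_char tilde_char[OF ST] by blast
  qed
  thus "p \<in> ?L \<longleftrightarrow> p \<in> ?R" using p by simp
qed

lemma cyc: assumes R: "R \<in> Up le E" and id: "\<forall>x\<in>X. \<alpha> x = x"
  shows "Dq_tilde X le E \<alpha> R = Dq_minus X le E \<alpha> R"
proof -
  have "ai y = y" if "y \<in> X" for y using id that a_ai aiX by metis
  thus ?thesis using tilde_char[OF R] minus_char[OF R] id EX by auto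
qed


lemma lat_le_sub: "lat_le (\<inter>) A B \<longleftrightarrow> A \<subseteq> B"
  unfolding lat_le_def by blast

lemma RL: "residuated_lattice (Up le E) (\<inter>) (\<union>) (O) le (rldiv E) (rrdiv E)"
  unfolding residuated_lattice_def lat_le_sub
proof (intro conjI ballI)
  show "le \<in> Up le E" by (rule le_Up)
qed (auto simp: int_Up un_Up comp_Up rldiv_Up rrdiv_Up le_comp comp_le O_assoc resid1 resid2)

lemma QRA: "distributive_qra (Up le E) (\<inter>) (\<union>) (O) le (Dq_zero X le E \<alpha>)
           (Dq_tilde X le E \<alpha>) (Dq_minus X le E \<alpha>) (Dq_prime X E \<alpha> \<beta>)"
  unfolding distributive_qra_def quasi_relation_algebra_def
proof (intro conjI ballI)
  show "\<exists>ldiv rdiv. residuated_lattice (Up le E) (\<inter>) (\<union>) (O) le ldiv rdiv \<and>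
     (\<forall>a\<in>Up le E. Dq_tilde X le E \<alpha> a = ldiv a (Dq_zero X le E \<alpha>) \<and> Dq_minus X le E \<alpha> a = rdiv (Dq_zero X le E \<alpha>) a)"
    using RL unfolding Dq_tilde_def Dq_minus_def by blast
qed (auto simp: zero_Up tilde_Up minus_Up prime_Up ng_mn mn_ng pr_pr pr_un pr_ng pr_mult un_Up)

end

theorem theorem3p15:
  fixes X :: "'a set" and le E :: "('a \<times> 'a) set" and \<alpha> \<beta> :: "'a \<Rightarrow> 'a"
  assumes "partial_order_on X le" and "le \<subseteq> X \<times> X"
    and "equiv X E" and "le \<subseteq> E"
    and "order_automorphism X le \<alpha>"
    and "dual_order_automorphism X le \<beta>"
    and "\<forall>x\<in>X. \<beta> (\<beta> x) = x"
    and "graph X \<alpha> \<subseteq> E" and "graph X \<beta> \<subseteq> E"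
    and "graph X \<beta> = graph X \<alpha> O graph X \<beta> O graph X \<alpha>"
  shows "distributive_qra (Up le E) (\<inter>) (\<union>) (O) le (Dq_zero X le E \<alpha>)
           (Dq_tilde X le E \<alpha>) (Dq_minus X le E \<alpha>) (Dq_prime X E \<alpha> \<beta>)
       \<and> ((\<forall>x\<in>X. \<alpha> x = x) \<longrightarrow>
           cyclic_distributive_qra (Up le E) (\<inter>) (\<union>) (O) le (Dq_zero X le E \<alpha>)
             (Dq_tilde X le E \<alpha>) (Dq_minus X le E \<alpha>) (Dq_prime X E \<alpha> \<beta>))"
proof -
  interpret dq X le E \<alpha> \<beta> using assms by (unfold_locales) auto
  show ?thesis using QRA cyc unfolding cyclic_distributive_qra_def by blast
qed

end
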